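(* For every $n \geq 3$, the set $\mathcal{T}^{(3)}_n \subseteq \mathcal{T}_n$ (defined in the context) satisfies $|\mathcal{T}^{(3)}_n| = F_{2n-5}$ and \[\chi(\mathrm{KG}(\mathcal{T}^{(3)}_n)) = n-2,\] where $F_k$ is the $k$th Fibonacci number with $F_1 = F_2 = 1$.
   Context: Label the vertices of a convex $n$-gon by $1,\dots,n$ in cyclic order; $\mathrm{Diag}_n = \{\{i,j\} \subseteq [n]: i-j\not\equiv \pm1 \pmod n\}$; a triangulation is identified with its set of diagonals, and $\mathcal{T}_n$ is the set of triangulations. For a set system $\mathcal{F}$, $\mathrm{KG}(\mathcal{F})$ is the graph on $\mathcal{F}$ with $F,F'$ adjacent iff $F\cap F'=\emptyset$. A parenthesization of an ordered list of symbols $\sigma_1,\dots,\sigma_m$ is a way to insert parentheses into $\sigma_1\sigma_2\cdots\sigma_m$ so that it is read as $m-1$ applications of a binary product. $k$-parenthesizations are defined recursively: a $0$-parenthesization is a single symbol. For odd $k\geq 1$, a $k$-parenthesization is one of the form $\pi_1(\pi_2(\cdots(\pi_{\ell-1}(\pi_\ell\sigma))\cdots))$ with $\ell \geq 0$, $\sigma$ a single symbol and $\pi_1,\dots,\pi_\ell$ $(k-1)$-parenthesizations (of consecutive blocks of symbols). For even $k \geq 2$, a $k$-parenthesization is one of the form $(\cdots((\sigma\pi_1)\pi_2)\cdots\pi_{\ell-1})\pi_\ell$ with $\ell\ge 0$, $\sigma$ a single symbol and $\pi_i$ $(k-1)$-parenthesizations. Triangulations $T\in\mathcal{T}_n$ are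 in bijection with parenthesizations of $\sigma_1,\dots,\sigma_{n-1}$: $T$ corresponds to the unique parenthesization in which, for every triangle $\{i,j,k\}$ of $T$ with $i<j<k$ (triangles may use sides of the polygon), the product $\sigma_i\cdots\sigma_{k-1}$ is formed by multiplying $\sigma_i\cdots\sigma_{j-1}$ and $\sigma_j\cdots\sigma_{k-1}$. $\mathcal{T}^{(k)}_n$ is the set of triangulations corresponding to $k$-parenthesizations under this bijection. *)

theory Defs
  imports Main "HOL-Number_Theory.Cong" "HOL-Number_Theory.Fib"
begin

text \<open>Diagonals of the convex n-gon with vertices 1..n in cyclic order.\<close>
definition Diag :: "nat \<Rightarrow> nat set set" where
  "Diag n = {D. D \<subseteq> {1..n} \<and> card D = 2 \<and>
      (\<forall>i\<in>D. \<forall>j\<in>D. \<not> [int i - int j = 1] (mod int n))}"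

text \<open>Parenthesizations as binary trees: Leaf is a single symbol,
  Node a b is the product of a and b.\<close>
datatype ptree = Leaf | Node ptree ptree

fun leaves :: "ptree \<Rightarrow> nat" where
  "leaves Leaf = 1"
| "leaves (Node a b) = leaves a + leaves b"

text \<open>Odd k: pi_1(pi_2(...(pi_l sigma))), i.e. a right comb
  whose left factors are (k-1)-parenthesizations. Even k: ((sigma pi_1) pi_2)...pi_l,
  a left comb whose right factors are (k-1)-parenthesizations.\<close>
fun kpar :: "nat \<Rightarrow> ptree \<Rightarrow> bool" where
  "kpar 0 t = (t = Leaf)"
| "kpar (Suc k) Leaf = True"
| "kpar (Suc k) (Node a b) =
     (if odd (Suc k) then kpar k a \<and> kpar (Suc k) b
      else kpar (Suc k) a \<and> kpar k b)"

text \<open>If the parenthesization t is applied to the symbols sigma_i, ..., sigma_(i + leaves t - 1),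
  each subproduct sigma_a ... sigma_(b-1) corresponds to the segment {a,b}.  The triangle
  {a,c,b} arises for the product of sigma_a..sigma_(c-1) and sigma_c..sigma_(b-1).\<close>
fun segs :: "nat \<Rightarrow> ptree \<Rightarrow> nat set set" where
  "segs i Leaf = {{i, Suc i}}"
| "segs i (Node a b) = insert {i, i + leaves (Node a b)} (segs i a \<union> segs (i + leaves a) b)"

definition tri_of :: "nat \<Rightarrow> ptree \<Rightarrow> nat set set" where
  "tri_of n t = segs 1 t \<inter> Diag n"

definition Tri :: "nat \<Rightarrow> nat set set set" where
  "Tri n = tri_of n ` {t. leaves t = n - 1}"

definition Tri_k :: "nat \<Rightarrow> nat \<Rightarrow> nat set set set" where
  "Tri_k k n = tri_of n ` {t. leaves t = n - 1 \<and> kpar k t}"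

definition kneser_chromatic :: "'a set set \<Rightarrow> nat" where
  "kneser_chromatic F = (LEAST k. \<exists>c :: 'a set \<Rightarrow> nat.
      (\<forall>A\<in>F. c A < k) \<and>
      (\<forall>A\<in>F. \<forall>B\<in>F. A \<noteq> B \<and> A \<inter> B = {} \<longrightarrow> c A \<noteq> c B))"

end

theory Submission
  imports Defs
begin


lemma cong_pos_one:
  fixes x m :: int
  assumes "0 \<le> x" "x < m" "1 < m"
  shows "[x = 1] (mod m) \<longleftrightarrow> x = 1"
  using assms by (simp add: cong_def mod_pos_pos_trivial)

lemma diag_pair:
  fixes a b n :: nat
  assumes n: "n \<ge> 3" and ab: "a < b"
  shows "{a,b} \<in> Diag n \<longleftrightarrow> 1 \<le> a \<and> b \<le> n \<and> a + 2 \<le> b \<and> \<not>(a = 1 \<and> b = n)"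
proof
  assume D: "{a,b} \<in> Diag n"
  then have sub: "1 \<le> a" "b \<le> n" unfolding Diag_def by auto
  from D have c1: "\<not> [int b - int a = 1] (mod int n)" and c2: "\<not> [int a - int b = 1] (mod int n)"
    unfolding Diag_def by auto
  have "int b - int a \<noteq> 1" using c1 by auto
  then have "a + 2 \<le> b" using ab by linarith
  moreover have "\<not>(a = 1 \<and> b = n)"
  proof
    assume "a = 1 \<and> b = n"
    then have "int a - int b = 1 - int n" by simp
    moreover have "[1 - int n = 1] (mod int n)"
      by (simp add: cong_def)
    ultimately show False using c2 by simp
  qed
  ultimately show "1 \<le> a \<and> b \<le> n \<and> a + 2 \<le> b \<and> \<not>(a = 1 \<and> b = n)" using sub by simp
next
  assume H: "1 \<le> a \<and> b \<le> n \<and> a + 2 \<le> b \<and> \<not>(a = 1 \<and> b = n)"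
  have card: "card {a,b} = 2" using ab by simp
  have sub: "{a,b} \<subseteq> {1..n}" using H by auto
  have m1: "\<not> [int b - int a = 1] (mod int n)"
    using cong_pos_one[of "int b - int a" "int n"] H n by simp
  have m2: "\<not> [int a - int b = 1] (mod int n)"
  proof
    assume "[int a - int b = 1] (mod int n)"
    then have "[int a - int b + int n = 1] (mod int n)"
      by (simp add: cong_def)
    moreover have "0 \<le> int a - int b + int n" "int a - int b + int n < int n" using H ab by auto
    ultimately have "int a - int b + int n = 1" using cong_pos_one[of "int a - int b + int n" "int n"] n by simp
    then show False using H by linarith
  qed
  have m0: "\<not> [0 = 1] (mod int n)"
    using cong_pos_one[of 0 "int n"] n by simp
  show "{a,b} \<in> Diag n"
    unfolding Diag_def using card sub m0 m1 m2 by auto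
qed

lemma Diag_elem:
  assumes "D \<in> Diag n"
  obtains a b where "D = {a,b}" "a < b"
proof -
  from assms have "card D = 2" unfolding Diag_def by auto
  then obtain x y where "D = {x,y}" "x \<noteq> y" by (auto simp: card_2_iff)
  then show ?thesis using that
    by (metis insert_commute linorder_neqE_nat)
qed

lemma Diag3: "Diag 3 = {}"
proof (rule ccontr)
  assume "Diag 3 \<noteq> {}"
  then obtain D where "D \<in> Diag 3" by auto
  then obtain a b where D: "D = {a,b}" "a < b" using Diag_elem by blast
  with \<open>D \<in> Diag 3\<close> have "1 \<le> a \<and> b \<le> 3 \<and> a + 2 \<le> b \<and> \<not>(a = 1 \<and> b = 3)"
    using diag_pair[of 3 a b] by simp
  then show False by auto
qed



lemma leaves_pos: "leaves t \<ge> 1"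
  by (induction t) auto

lemma seg_elems:
  "s \<in> segs i t \<Longrightarrow> \<exists>u v. s = {u,v} \<and> i \<le> u \<and> u < v \<and> v \<le> i + leaves t"
proof (induction t arbitrary: i)
  case Leaf then show ?case by auto
next
  case (Node a b)
  have la: "leaves a \<ge> 1" "leaves b \<ge> 1" using leaves_pos by auto
  from Node.prems consider "s = {i, i + leaves (Node a b)}" | "s \<in> segs i a" | "s \<in> segs (i + leaves a) b"
    by auto
  then show ?case
  proof cases
    case 1 then show ?thesis using la
      by (intro exI[of _ i] exI[of _ "i + leaves (Node a b)"]) auto
  next
    case 2 from Node.IH(1)[OF this] show ?thesis by fastforce
  next
    case 3 from Node.IH(2)[OF this] show ?thesis by fastforce
  qed
qed

lemma seg_sub: "s \<in> segs i t \<Longrightarrow> s \<subseteq> {i..i + leaves t}"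
  using seg_elems[of s i t] by auto

lemma seg_root: "{i, i + leaves t} \<in> segs i t"
  by (cases t) auto

lemma seg_leaf: "i \<le> x \<Longrightarrow> x < i + leaves t \<Longrightarrow> {x, Suc x} \<in> segs i t"
proof (induction t arbitrary: i)
  case Leaf then show ?case by auto
next
  case (Node a b)
  show ?case
  proof (cases "x < i + leaves a")
    case True then show ?thesis using Node by auto
  next
    case False then show ?thesis using Node by auto
  qed
qed



lemma segs_inj: "segs i t = segs i t' \<Longrightarrow> leaves t = leaves t' \<Longrightarrow> t = t'"
proof (induction t arbitrary: i t')
  case Leaf
  show ?case
  proof (cases t')
    case Leaf then show ?thesis by simp
  next
    case (Node x y)
    then have "leaves t' \<ge> 2" using leaves_pos[of x] leaves_pos[of y] by simp
    with Leaf.prems show ?thesis by simp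
  qed
next
  case (Node a b)
  obtain a' b' where t': "t' = Node a' b'"
  proof (cases t')
    case Leaf
    then have "leaves (Node a b) = 1" using Node.prems by simp
    moreover have "leaves (Node a b) \<ge> 2" using leaves_pos[of a] leaves_pos[of b] by simp
    ultimately show ?thesis by simp
  next
    case (Node x y) then show ?thesis using that by simp
  qed
  have key: "\<And>a b v. {i, v} \<in> segs i (Node a b) \<Longrightarrow> v < i + leaves (Node a b) \<Longrightarrow> v \<le> i + leaves a"
  proof -
    fix a b v assume h: "{i, v} \<in> segs i (Node a b)" "v < i + leaves (Node a b)"
    have "leaves a \<ge> 1" by (rule leaves_pos)
    from h(1) have "{i,v} = {i, i + leaves (Node a b)} \<or> {i,v} \<in> segs i a \<or> {i,v} \<in> segs (i + leaves a) b"
      by simp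
    then consider "{i,v} = {i, i + leaves (Node a b)}" | "{i,v} \<in> segs i a" | "{i,v} \<in> segs (i + leaves a) b"
      by blast
    then show "v \<le> i + leaves a"
    proof cases
      case 1 then show ?thesis using h(2) by (auto simp: doubleton_eq_iff)
    next
      case 2 then show ?thesis using seg_sub[of "{i,v}" i a] by auto
    next
      case 3 then have "i \<ge> i + leaves a" using seg_sub[of "{i,v}" "i + leaves a" b] by auto
      then show ?thesis using \<open>leaves a \<ge> 1\<close> by simp
    qed
  qed
  have r1: "{i, i + leaves a} \<in> segs i (Node a b)" using seg_root[of i a] by simp
  have r2: "{i, i + leaves a'} \<in> segs i (Node a' b')" using seg_root[of i a'] by simp
  have lt1: "i + leaves a < i + leaves (Node a b)" using leaves_pos[of b] by simp
  have lt2: "i + leaves a' < i + leaves (Node a' b')" using leaves_pos[of b'] by simp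
  have se: "segs i (Node a b) = segs i (Node a' b')" using Node.prems t' by simp
  have le: "leaves (Node a b) = leaves (Node a' b')" using Node.prems t' by simp
  have "i + leaves a \<le> i + leaves a'"
    by (rule key[OF r1[unfolded se] lt1[unfolded le]])
  moreover have "i + leaves a' \<le> i + leaves a"
    by (rule key[OF r2[folded se] lt2[folded le]])
  ultimately have la: "leaves a = leaves a'" by simp
  have lb: "leaves b = leaves b'" using la Node.prems t' by simp
  have fa: "\<And>a b. segs i a = {s \<in> segs i (Node a b). s \<subseteq> {i..i + leaves a}}"
  proof -
    fix a b
    have A: "s \<subseteq> {i..i + leaves a}" if "s \<in> segs i a" for s using seg_sub that by blast
    have B: "\<not> s \<subseteq> {i..i + leaves a}" if "s \<in> segs (i + leaves a) b" for s
      using seg_elems[OF that] by auto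
    have C: "\<not> {i, i + leaves (Node a b)} \<subseteq> {i..i + leaves a}"
      using leaves_pos[of b] by auto
    show "segs i a = {s \<in> segs i (Node a b). s \<subseteq> {i..i + leaves a}}"
      using A B C by auto
  qed
  have fb: "\<And>a b. segs (i + leaves a) b = {s \<in> segs i (Node a b). s \<subseteq> {i + leaves a..i + leaves (Node a b)}}"
  proof -
    fix a b
    have A: "s \<subseteq> {i + leaves a..i + leaves (Node a b)}" if "s \<in> segs (i + leaves a) b" for s
      using seg_sub[OF that] by auto
    have B: "\<not> s \<subseteq> {i + leaves a..i + leaves (Node a b)}" if "s \<in> segs i a" for s
      using seg_elems[OF that] by auto
    have C: "\<not> {i, i + leaves (Node a b)} \<subseteq> {i + leaves a..i + leaves (Node a b)}"
      using leaves_pos[of a] by auto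
    show "segs (i + leaves a) b = {s \<in> segs i (Node a b). s \<subseteq> {i + leaves a..i + leaves (Node a b)}}"
      using A B C by auto
  qed
  have "segs i a = segs i a'" by (metis fa se la)
  then have "a = a'" using Node.IH(1) la by blast
  have "segs (i + leaves a) b = segs (i + leaves a) b'"
    by (metis fb se la le)
  then have "b = b'" using Node.IH(2) lb by blast
  show ?case using \<open>a = a'\<close> \<open>b = b'\<close> t' by simp
qed



lemma tri_sub: "tri_of n t \<subseteq> Diag n"
  unfolding tri_of_def by auto

lemma tri_sub_segs: "tri_of n t \<subseteq> segs 1 t"
  unfolding tri_of_def by auto

lemma segs_decomp:
  assumes n: "n \<ge> 3" and l: "leaves t = n - 1"
  shows "segs 1 t = tri_of n t \<union> {{x, Suc x} | x. 1 \<le> x \<and> x < n} \<union> {{1,n}}"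
proof
  show "segs 1 t \<subseteq> tri_of n t \<union> {{x, Suc x} | x. 1 \<le> x \<and> x < n} \<union> {{1,n}}"
  proof
    fix s assume s: "s \<in> segs 1 t"
    then obtain u v where uv: "s = {u,v}" "1 \<le> u" "u < v" "v \<le> n"
      using seg_elems[OF s] l n by fastforce
    show "s \<in> tri_of n t \<union> {{x, Suc x} | x. 1 \<le> x \<and> x < n} \<union> {{1,n}}"
    proof (cases "s \<in> Diag n")
      case True then show ?thesis using s unfolding tri_of_def by auto
    next
      case False
      then have "\<not> (u + 2 \<le> v \<and> \<not>(u = 1 \<and> v = n))"
        using diag_pair[OF n uv(3)] uv by simp
      then have "v = Suc u \<or> (u = 1 \<and> v = n)" using uv by linarith
      then show ?thesis using uv by auto
    qed
  qed
next
  have A: "{x, Suc x} \<in> segs 1 t" if "1 \<le> x" "x < n" for x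
    using seg_leaf[of 1 x t] that l n by simp
  have B: "{1, n} \<in> segs 1 t" using seg_root[of 1 t] l n by simp
  show "tri_of n t \<union> {{x, Suc x} | x. 1 \<le> x \<and> x < n} \<union> {{1,n}} \<subseteq> segs 1 t"
    using A B tri_sub_segs by blast
qed

lemma tri_inj:
  assumes n: "n \<ge> 3"
  shows "inj_on (tri_of n) {t. leaves t = n - 1}"
proof (rule inj_onI)
  fix t t' assume t: "t \<in> {t. leaves t = n - 1}" and t': "t' \<in> {t. leaves t = n - 1}"
    and eq: "tri_of n t = tri_of n t'"
  have "segs 1 t = segs 1 t'"
    using segs_decomp[OF n, of t] segs_decomp[OF n, of t'] t t' eq by simp
  then show "t = t'" using segs_inj t t' by simp
qed

lemma card_Tri3:
  assumes n: "n \<ge> 3"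
  shows "card (Tri_k 3 n) = card {t. leaves t = n - 1 \<and> kpar 3 t}"
  unfolding Tri_k_def
  by (rule card_image, rule inj_on_subset[OF tri_inj[OF n]]) auto



definition S :: "nat \<Rightarrow> nat \<Rightarrow> ptree set" where
  "S k m = {t. leaves t = m \<and> kpar k t}"

definition K :: "nat \<Rightarrow> nat \<Rightarrow> nat" where
  "K k m = card (S k m)"

abbreviation NodeP :: "ptree \<times> ptree \<Rightarrow> ptree" where
  "NodeP \<equiv> (\<lambda>(a,b). Node a b)"

lemma NodeP_inj: "inj NodeP"
  by (auto simp: inj_def)

lemma finite_leaves: "finite {t. leaves t = m}"
proof (induction m rule: less_induct)
  case (less m)
  have "{t. leaves t = m} \<subseteq> {Leaf} \<union> (\<Union>i\<in>{1..<m}. NodeP ` ({t. leaves t = i} \<times> {t. leaves t = m - i}))"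
  proof
    fix t assume t: "t \<in> {t. leaves t = m}"
    show "t \<in> {Leaf} \<union> (\<Union>i\<in>{1..<m}. NodeP ` ({t. leaves t = i} \<times> {t. leaves t = m - i}))"
    proof (cases t)
      case Leaf then show ?thesis by simp
    next
      case (Node a b)
      have "1 \<le> leaves a" "1 \<le> leaves b" using leaves_pos by auto
      then have "leaves a \<in> {1..<m}" "leaves b = m - leaves a" using t Node by auto
      then show ?thesis using Node by force
    qed
  qed
  moreover have "finite ({Leaf} \<union> (\<Union>i\<in>{1..<m}. NodeP ` ({t. leaves t = i} \<times> {t. leaves t = m - i})))"
    using less.IH leaves_pos by auto
  ultimately show ?case by (rule finite_subset)
qed

lemma finite_S: "finite (S k m)"
  unfolding S_def by (rule finite_subset[OF _ finite_leaves[of m]]) auto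

definition fa :: "nat \<Rightarrow> nat" where "fa k = (if odd (Suc k) then k else Suc k)"
definition fb :: "nat \<Rightarrow> nat" where "fb k = (if odd (Suc k) then Suc k else k)"

lemma fa0: "fa 0 = 0" and fb0: "fb 0 = 1" and fa1: "fa 1 = 2" and fb1: "fb 1 = 1"
  and fa2: "fa 2 = 2" and fb2: "fb 2 = 3"
  unfolding fa_def fb_def by simp_all

lemma kpar_Node: "kpar (Suc k) (Node a b) \<longleftrightarrow> kpar (fa k) a \<and> kpar (fb k) b"
  unfolding fa_def fb_def by simp

lemma S_decomp:
  assumes m: "m \<ge> 2"
  shows "S (Suc k) m = (\<Union>i\<in>{1..<m}. NodeP ` (S (fa k) i \<times> S (fb k) (m - i)))"
proof
  show "S (Suc k) m \<subseteq> (\<Union>i\<in>{1..<m}. NodeP ` (S (fa k) i \<times> S (fb k) (m - i)))"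
  proof
    fix t assume t: "t \<in> S (Suc k) m"
    show "t \<in> (\<Union>i\<in>{1..<m}. NodeP ` (S (fa k) i \<times> S (fb k) (m - i)))"
    proof (cases t)
      case Leaf then show ?thesis using t m unfolding S_def by simp
    next
      case (Node a b)
      have "1 \<le> leaves a" "1 \<le> leaves b" using leaves_pos by auto
      then have "leaves a \<in> {1..<m}" "leaves b = m - leaves a" using t Node unfolding S_def by auto
      moreover have "kpar (fa k) a" "kpar (fb k) b" using t Node kpar_Node unfolding S_def by auto
      ultimately show ?thesis using Node unfolding S_def by force
    qed
  qed
next
  show "(\<Union>i\<in>{1..<m}. NodeP ` (S (fa k) i \<times> S (fb k) (m - i))) \<subseteq> S (Suc k) m"
    unfolding S_def using kpar_Node by auto
qed

lemma K_decomp: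
  assumes m: "m \<ge> 2"
  shows "K (Suc k) m = (\<Sum>i\<in>{1..<m}. K (fa k) i * K (fb k) (m - i))"
proof -
  have "K (Suc k) m = card (\<Union>i\<in>{1..<m}. NodeP ` (S (fa k) i \<times> S (fb k) (m - i)))"
    unfolding K_def using S_decomp[OF m] by simp
  also have "\<dots> = (\<Sum>i\<in>{1..<m}. card (NodeP ` (S (fa k) i \<times> S (fb k) (m - i))))"
  proof (rule card_UN_disjoint)
    show "finite {1..<m}" by simp
    show "\<forall>i\<in>{1..<m}. finite (NodeP ` (S (fa k) i \<times> S (fb k) (m - i)))"
      using finite_S by auto
    show "\<forall>i\<in>{1..<m}. \<forall>j\<in>{1..<m}. i \<noteq> j \<longrightarrow>
      NodeP ` (S (fa k) i \<times> S (fb k) (m - i)) \<inter> NodeP ` (S (fa k) j \<times> S (fb k) (m - j)) = {}"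
      unfolding S_def by auto
  qed
  also have "\<dots> = (\<Sum>i\<in>{1..<m}. K (fa k) i * K (fb k) (m - i))"
  proof (rule sum.cong)
    fix i
    show "card (NodeP ` (S (fa k) i \<times> S (fb k) (m - i))) = K (fa k) i * K (fb k) (m - i)"
      unfolding K_def
      by (subst card_image[OF inj_on_subset[OF NodeP_inj]]) (auto simp: card_cartesian_product)
  qed simp
  finally show ?thesis .
qed

lemma K0: "K 0 m = (if m = 1 then 1 else 0)"
proof -
  have "S 0 m = (if m = 1 then {Leaf} else {})" unfolding S_def by auto
  then show ?thesis unfolding K_def by simp
qed

lemma K_1: "K (Suc k) 1 = 1"
proof -
  have "S (Suc k) 1 = {Leaf}" unfolding S_def
  proof safe
    fix t assume l: "leaves t = 1" then show "t = Leaf"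
    proof (cases t)
      case (Node a b)
      then have "leaves t \<ge> 2" using leaves_pos[of a] leaves_pos[of b] by simp
      then show ?thesis using l by simp
    qed simp
  qed auto
  then show ?thesis unfolding K_def by simp
qed

lemma K1: "m \<ge> 1 \<Longrightarrow> K 1 m = 1"
proof (induction m rule: nat_induct_at_least)
  case base then show ?case using K_1[of 0] by simp
next
  case (Suc m)
  have "K 1 (Suc m) = (\<Sum>i\<in>{1..<Suc m}. K 0 i * K 1 (Suc m - i))"
    using K_decomp[of "Suc m" 0] Suc unfolding fa0 fb0 by simp
  also have "\<dots> = (\<Sum>i\<in>{1}. K 0 i * K 1 (Suc m - i))"
    by (rule sum.mono_neutral_right) (use Suc in \<open>auto simp: K0\<close>)
  also have "\<dots> = 1" using Suc by (simp add: K0)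
  finally show ?case .
qed

lemma K2_sum: "m \<ge> 2 \<Longrightarrow> K 2 m = (\<Sum>i\<in>{1..<m}. K 2 i)"
proof -
  assume m: "m \<ge> 2"
  have "K 2 m = (\<Sum>i\<in>{1..<m}. K 2 i * K 1 (m - i))"
    using K_decomp[OF m, of 1] unfolding fa1 fb1 by (simp add: numeral_2_eq_2)
  also have "\<dots> = (\<Sum>i\<in>{1..<m}. K 2 i)"
  proof (rule sum.cong)
    fix x assume "x \<in> {1..<m}"
    then have "1 \<le> m - x" by auto
    then have "K 1 (m - x) = 1" by (rule K1)
    then show "K 2 x * K 1 (m - x) = K 2 x" by simp
  qed simp
  finally show ?thesis .
qed

lemma K3_sum: "m \<ge> 2 \<Longrightarrow> K 3 m = (\<Sum>i\<in>{1..<m}. K 2 i * K 3 (m - i))"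
  using K_decomp[of m 2] unfolding fa2 fb2 by (simp add: numeral_3_eq_3)

lemma K2_double: "m \<ge> 2 \<Longrightarrow> K 2 (Suc m) = 2 * K 2 m"
proof -
  assume m: "m \<ge> 2"
  have "K 2 (Suc m) = (\<Sum>i\<in>{1..<Suc m}. K 2 i)" using K2_sum[of "Suc m"] m by simp
  also have "\<dots> = (\<Sum>i\<in>{1..<m}. K 2 i) + K 2 m" using m by simp
  also have "\<dots> = 2 * K 2 m" using K2_sum[OF m] by simp
  finally show ?thesis .
qed

lemma K2_1: "K 2 1 = 1" using K_1[of 1] by (simp add: numeral_2_eq_2)
lemma K3_1: "K 3 1 = 1" using K_1[of 2] by (simp add: numeral_3_eq_3)
lemma K2_2: "K 2 2 = 1" using K2_sum[of 2] K2_1 by (simp add: numeral_2_eq_2)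

lemma K3_shift: "m \<ge> 1 \<Longrightarrow> K 3 (Suc m) = (\<Sum>i<m. K 2 (Suc i) * K 3 (m - i))"
proof -
  assume m: "m \<ge> 1"
  have "K 3 (Suc m) = (\<Sum>i\<in>{Suc 0..<Suc m}. K 2 i * K 3 (Suc m - i))" using K3_sum[of "Suc m"] m by simp
  also have "\<dots> = (\<Sum>i\<in>{0..<m}. K 2 (Suc i) * K 3 (Suc m - Suc i))"
    by (subst sum.atLeast_Suc_lessThan_Suc_shift) (simp add: comp_def)
  also have "\<dots> = (\<Sum>i<m. K 2 (Suc i) * K 3 (m - i))" by (simp add: atLeast0LessThan)
  finally show ?thesis .
qed

lemma K3_rec: "K 3 (m + 3) + K 3 (m + 1) = 3 * K 3 (m + 2)"
proof -
  define X where "X = (\<Sum>i<m. K 2 (Suc (Suc i)) * K 3 (m - i))"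
  have e1: "K 3 (m + 2) = K 3 (m + 1) + X"
  proof -
    have "K 3 (m + 2) = (\<Sum>i<Suc m. K 2 (Suc i) * K 3 (Suc m - i))"
      using K3_shift[of "Suc m"] by simp
    also have "\<dots> = K 2 1 * K 3 (Suc m) + X"
      unfolding X_def by (subst sum.lessThan_Suc_shift) simp
    finally show ?thesis using K2_1 by simp
  qed
  have e2: "K 3 (m + 3) = K 3 (m + 2) + K 3 (m + 1) + 2 * X"
  proof -
    have "K 3 (m + 3) = (\<Sum>i<Suc (Suc m). K 2 (Suc i) * K 3 (Suc (Suc m) - i))"
      using K3_shift[of "Suc (Suc m)"] by (simp add: numeral_3_eq_3)
    also have "\<dots> = K 2 1 * K 3 (Suc (Suc m)) + (\<Sum>i<Suc m. K 2 (Suc (Suc i)) * K 3 (Suc m - i))"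
      by (subst sum.lessThan_Suc_shift) simp
    also have "(\<Sum>i<Suc m. K 2 (Suc (Suc i)) * K 3 (Suc m - i)) = K 2 2 * K 3 (Suc m) + (\<Sum>i<m. K 2 (Suc (Suc (Suc i))) * K 3 (m - i))"
      by (subst sum.lessThan_Suc_shift) (simp add: numeral_2_eq_2)
    also have "(\<Sum>i<m. K 2 (Suc (Suc (Suc i))) * K 3 (m - i)) = 2 * X"
      unfolding X_def sum_distrib_left
      by (rule sum.cong) (auto simp: K2_double)
    finally show ?thesis using K2_1 K2_2 by (simp add: numeral_2_eq_2)
  qed
  show ?thesis using e1 e2 by simp
qed

lemma K3_fib: "K 3 (k + 2) = fib (2 * k + 1) \<and> K 3 (k + 3) = fib (2 * k + 3)"
proof (induction k)
  case 0
  have a: "K 3 2 = 1" using K3_sum[of 2] K2_1 K3_1 by (simp add: numeral_2_eq_2)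
  have r: "K 3 3 + K 3 1 = 3 * K 3 2" using K3_rec[of 0] by (simp add: numeral_2_eq_2)
  have "K 3 3 = 2" using r a K3_1 by linarith
  moreover have "fib 3 = 2" by (simp add: eval_nat_numeral)
  moreover have "K 3 (Suc (Suc 0)) = 1" using a by (simp add: numeral_2_eq_2)
  ultimately show ?case using a by simp
next
  case (Suc k)
  have e: "k + 1 + 3 = k + 4" "k + 1 + 1 = k + 2" "k + 1 + 2 = k + 3" by simp_all
  have r: "K 3 (k + 4) + K 3 (k + 2) = 3 * K 3 (k + 3)" using K3_rec[of "k + 1"] unfolding e .
  have f1: "fib (2 * k + 5) = fib (2 * k + 4) + fib (2 * k + 3)"
    using fib.simps(3)[of "2 * k + 3"] by (simp add: eval_nat_numeral)
  have f2: "fib (2 * k + 4) = fib (2 * k + 3) + fib (2 * k + 2)"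
    using fib.simps(3)[of "2 * k + 2"] by (simp add: eval_nat_numeral)
  have f3: "fib (2 * k + 3) = fib (2 * k + 2) + fib (2 * k + 1)"
    using fib.simps(3)[of "2 * k + 1"] by (simp add: eval_nat_numeral)
  have "K 3 (k + 4) = fib (2 * k + 5)" using r Suc.IH f1 f2 f3 by linarith
  then show ?case using Suc.IH by (simp add: eval_nat_numeral)
qed

lemma card_part:
  assumes n: "n \<ge> 3"
  shows "card (Tri_k 3 n) = fib (2 * n - 5)"
proof -
  have "card (Tri_k 3 n) = K 3 (n - 1)" using card_Tri3[OF n] unfolding K_def S_def by simp
  also have "n - 1 = (n - 3) + 2" using n by simp
  also have "K 3 ((n - 3) + 2) = fib (2 * (n - 3) + 1)" using K3_fib by blast
  also have "2 * (n - 3) + 1 = 2 * n - 5" using n by simp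
  finally show ?thesis .
qed



definition prop_col :: "nat \<Rightarrow> (nat set set \<Rightarrow> nat) \<Rightarrow> nat set set set \<Rightarrow> bool" where
  "prop_col k c FF \<longleftrightarrow> (\<forall>A\<in>FF. c A < k) \<and> (\<forall>A\<in>FF. \<forall>B\<in>FF. A \<noteq> B \<and> A \<inter> B = {} \<longrightarrow> c A \<noteq> c B)"

lemma kneser_prop: "kneser_chromatic FF = (LEAST k. \<exists>c. prop_col k c FF)"
  unfolding kneser_chromatic_def prop_col_def by simp

lemma Tri3_mem: "T \<in> Tri_k 3 n \<longleftrightarrow> (\<exists>t. leaves t = n - 1 \<and> kpar 3 t \<and> T = tri_of n t)"
  unfolding Tri_k_def by auto

lemma Tri_Diag: "T \<in> Tri_k 3 n \<Longrightarrow> T \<subseteq> Diag n"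
  using tri_sub unfolding Tri_k_def by auto

lemma Tri3_eq: "T \<in> Tri_k 3 3 \<Longrightarrow> T' \<in> Tri_k 3 3 \<Longrightarrow> T = T'"
  using Tri_Diag[of T 3] Tri_Diag[of T' 3] Diag3 by auto

lemma diag1:
  assumes n: "n \<ge> 3" and d: "{1, x} \<in> Diag n"
  shows "3 \<le> x \<and> x < n"
proof -
  have "x \<noteq> 1" using d unfolding Diag_def by auto
  moreover have "x \<noteq> 0" using d unfolding Diag_def by auto
  ultimately have "1 < x" by simp
  then show ?thesis using diag_pair[OF n, of 1 x] d by auto
qed

lemma first_split:
  assumes "leaves t \<ge> 2"
  shows "(\<exists>x. {i, x} \<in> segs i t \<and> i + 2 \<le> x \<and> x < i + leaves t) \<or> {Suc i, i + leaves t} \<in> segs i t"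
proof (cases t)
  case Leaf then show ?thesis using assms by simp
next
  case (Node a b)
  show ?thesis
  proof (cases "leaves a \<ge> 2")
    case True
    have "{i, i + leaves a} \<in> segs i t" using seg_root[of i a] Node by simp
    moreover have "i + leaves a < i + leaves t" using Node leaves_pos[of b] by simp
    ultimately show ?thesis using True by auto
  next
    case False
    then have "leaves a = 1" using leaves_pos[of a] by simp
    then have "{Suc i, i + leaves t} \<in> segs i t" using seg_root[of "i + leaves a" b] Node by simp
    then show ?thesis by simp
  qed
qed

definition col0 :: "nat \<Rightarrow> nat set set \<Rightarrow> nat" where
  "col0 n T = (if \<exists>x. {1,x} \<in> T then (LEAST x. {1,x} \<in> T) - 3 else n - 3)"

lemma upper:
  assumes n: "n \<ge> 3"
  shows "prop_col (n - 2) (col0 n) (Tri_k 3 n)"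
proof -
  have least: "3 \<le> (LEAST x. {1,x} \<in> T) \<and> (LEAST x. {1,x} \<in> T) < n \<and> {1, LEAST x. {1,x} \<in> T} \<in> T"
    if "T \<in> Tri_k 3 n" "\<exists>x. {1,x} \<in> T" for T
  proof -
    have m: "{1, LEAST x. {1,x} \<in> T} \<in> T" using that(2) by (rule LeastI_ex)
    then show ?thesis using diag1[OF n] Tri_Diag[OF that(1)] by blast
  qed
  have bound: "col0 n T < n - 2" if "T \<in> Tri_k 3 n" for T
  proof (cases "\<exists>x. {1,x} \<in> T")
    case True
    then have "(LEAST x. {1,x} \<in> T) < n" using least[OF that] by blast
    then show ?thesis using True n unfolding col0_def by simp
  next
    case False then show ?thesis using n unfolding col0_def by simp
  qed
  have none: "{2, n} \<in> T" if TT: "T \<in> Tri_k 3 n" and nT: "\<not>(\<exists>x. {1,x} \<in> T)" and n4: "n \<ge> 4" for T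
  proof -
    have "\<exists>t. leaves t = n - 1 \<and> kpar 3 t \<and> T = tri_of n t" using TT Tri3_mem by simp
    then obtain t where t: "leaves t = n - 1" "T = tri_of n t" by blast
    have l2: "leaves t \<ge> 2" using t(1) n4 by simp
    have c1: False if x: "{1, x} \<in> segs 1 t" "1 + 2 \<le> x" "x < 1 + leaves t" for x
    proof -
      have "x < n" using x(3) t(1) n by simp
      then have "{1,x} \<in> Diag n" using diag_pair[OF n, of 1 x] x(2) by simp
      then have "{1,x} \<in> T" using x(1) t(2) unfolding tri_of_def by simp
      then show False using nT by blast
    qed
    have "{Suc 1, 1 + leaves t} \<in> segs 1 t"
      using first_split[OF l2, of 1] c1 by blast
    then have s: "{2, n} \<in> segs 1 t" using t(1) n by (simp add: numeral_2_eq_2)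
    have "{2,n} \<in> Diag n" using diag_pair[OF n, of 2 n] n4 by simp
    then show ?thesis using s t(2) unfolding tri_of_def by simp
  qed
  show ?thesis unfolding prop_col_def
  proof (intro conjI ballI impI)
    fix A assume "A \<in> Tri_k 3 n" then show "col0 n A < n - 2" by (rule bound)
  next
    fix A B assume A: "A \<in> Tri_k 3 n" and B: "B \<in> Tri_k 3 n" and AB: "A \<noteq> B \<and> A \<inter> B = {}"
    show "col0 n A \<noteq> col0 n B"
    proof (cases "\<exists>x. {1,x} \<in> A")
      case eA: True
      show ?thesis
      proof (cases "\<exists>x. {1,x} \<in> B")
        case eB: True
        show ?thesis
        proof
          assume "col0 n A = col0 n B"
          then have "(LEAST x. {1,x} \<in> A) - 3 = (LEAST x. {1,x} \<in> B) - 3"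
            using eA eB unfolding col0_def by simp
          then have "(LEAST x. {1,x} \<in> A) = (LEAST x. {1,x} \<in> B)"
            using least[OF A eA] least[OF B eB] by (elim conjE) linarith
          then show False using least[OF A eA] least[OF B eB] AB by auto
        qed
      next
        case eB: False
        then show ?thesis using eA least[OF A eA] unfolding col0_def by auto
      qed
    next
      case eA: False
      show ?thesis
      proof (cases "\<exists>x. {1,x} \<in> B")
        case eB: True
        then show ?thesis using eA least[OF B eB] unfolding col0_def by auto
      next
        case eB: False
        show ?thesis
        proof (cases "n = 3")
          case True then show ?thesis using Tri3_eq A B AB by blast
        next
          case False
          then have "n \<ge> 4" using n by simp
          then show ?thesis using none[OF A eA] none[OF B eB] AB by auto
        qed
      qed
    qed
  qed
qed



fun psi :: "ptree \<Rightarrow> ptree" where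
  "psi Leaf = Node Leaf Leaf"
| "psi (Node a b) = Node a (psi b)"

fun phi :: "ptree \<Rightarrow> ptree" where
  "phi Leaf = Node Leaf Leaf"
| "phi (Node a b) = (if b = Leaf then Node (Node a Leaf) Leaf else Node a (phi b))"

fun lp :: "nat \<Rightarrow> ptree \<Rightarrow> nat" where
  "lp i Leaf = i"
| "lp i (Node a b) = (if b = Leaf then i else lp (i + leaves a) b)"

definition gm :: "nat \<Rightarrow> nat set \<Rightarrow> nat set" where
  "gm e s = (\<lambda>x. if x = e then Suc e else x) ` s"

fun rcomb :: "nat \<Rightarrow> ptree" where
  "rcomb 0 = Leaf"
| "rcomb (Suc m) = Node Leaf (rcomb m)"

lemma leaves_psi: "leaves (psi t) = Suc (leaves t)"
  by (induction t) auto

lemma leaves_phi: "leaves (phi t) = Suc (leaves t)"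
  by (induction t) auto

lemma leaves_rcomb: "leaves (rcomb m) = Suc m"
  by (induction m) auto

lemma kpar_Leaf: "kpar (Suc k) Leaf"
  by simp

lemma s3: "Suc 2 = (3::nat)" and s2: "Suc 1 = (2::nat)" by simp_all

lemma kpar3_Node: "kpar 3 (Node a b) \<longleftrightarrow> kpar 2 a \<and> kpar 3 b"
  using kpar_Node[of 2 a b] unfolding fa2 fb2 s3 .

lemma kpar2_Node: "kpar 2 (Node a b) \<longleftrightarrow> kpar 2 a \<and> kpar 1 b"
  using kpar_Node[of 1 a b] unfolding fa1 fb1 s2 .

lemma kpar1_Node: "kpar 1 (Node a b) \<longleftrightarrow> kpar 0 a \<and> kpar 1 b"
  using kpar_Node[of 0 a b] unfolding fa0 fb0 One_nat_def .

lemma kpar3_Leaf: "kpar 3 Leaf" using kpar_Leaf[of 2] unfolding s3 .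
lemma kpar2_Leaf: "kpar 2 Leaf" using kpar_Leaf[of 1] unfolding s2 .
lemma kpar1_Leaf: "kpar 1 Leaf" using kpar_Leaf[of 0] by simp

lemma kpar1_rcomb: "kpar 1 (rcomb m)"
  by (induction m) (auto simp: kpar1_Node kpar1_Leaf)

lemma kpar3_rcomb: "kpar 3 (rcomb m)"
  by (induction m) (auto simp: kpar3_Node kpar3_Leaf kpar2_Leaf)

lemma kpar3_psi: "kpar 3 t \<Longrightarrow> kpar 3 (psi t)"
  by (induction t) (auto simp: kpar3_Node kpar3_Leaf kpar2_Leaf)

lemma kpar3_phi: "kpar 3 t \<Longrightarrow> kpar 3 (phi t)"
  by (induction t) (auto simp: kpar3_Node kpar3_Leaf kpar2_Node kpar1_Leaf kpar2_Leaf)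

lemma gm_notin: "e \<notin> s \<Longrightarrow> gm e s = s"
  unfolding gm_def by (rule image_cong[where g=id, simplified]) auto

lemma gm_pair: "gm e {a, b} = {if a = e then Suc e else a, if b = e then Suc e else b}"
  unfolding gm_def by simp

lemma gm_no_e: "e \<notin> gm e s"
  unfolding gm_def by auto

lemma gm_inj:
  assumes "s \<subseteq> {..e}" "s' \<subseteq> {..e}" "gm e s = gm e s'"
  shows "s = s'"
proof -
  have "inj_on (\<lambda>x. if x = e then Suc e else x) {..e}"
    by (auto simp: inj_on_def)
  from inj_on_image_eq_iff[OF this assms(1) assms(2)] show ?thesis
    using assms(3) unfolding gm_def by blast
qed

lemma segs_psi:
  "segs i (psi t) = gm (i + leaves t) ` segs i t \<union> {{i + leaves t - 1, i + leaves t}, {i + leaves t, Suc (i + leaves t)}}"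
proof (induction t arbitrary: i)
  case Leaf
  show ?case by (auto simp: gm_pair)
next
  case (Node a b)
  define e where "e = i + leaves (Node a b)"
  define j where "j = i + leaves a"
  have je: "j + leaves b = e" unfolding e_def j_def by simp
  have la: "leaves a \<ge> 1" "leaves b \<ge> 1" using leaves_pos by auto
  have ga: "gm e ` segs i a = segs i a"
  proof -
    have "gm e s = s" if "s \<in> segs i a" for s
      using seg_sub[OF that] la unfolding e_def by (intro gm_notin) auto
    then show ?thesis by (simp add: image_cong[where g=id, simplified])
  qed
  have gr: "gm e {i, e} = {i, Suc e}" using la unfolding e_def by (simp add: gm_pair)
  have "segs i (psi (Node a b)) = insert {i, Suc e} (segs i a \<union> segs j (psi b))"
    unfolding e_def j_def by (simp add: leaves_psi)
  also have "segs j (psi b) = gm e ` segs j b \<union> {{e - 1, e}, {e, Suc e}}"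
    using Node.IH(2)[of j] je by simp
  finally have L: "segs i (psi (Node a b)) = insert {i, Suc e} (segs i a \<union> (gm e ` segs j b \<union> {{e - 1, e}, {e, Suc e}}))" .
  have R: "gm e ` segs i (Node a b) = insert {i, Suc e} (segs i a \<union> gm e ` segs j b)"
    using ga gr unfolding e_def j_def by (simp add: image_Un)
  show ?case using L R unfolding e_def[symmetric] by auto
qed

lemma lp_props:
  "t \<noteq> Leaf \<Longrightarrow> {lp i t, i + leaves t} \<in> segs i t \<and> {lp i t, i + leaves t - 1} \<in> segs i t
     \<and> i \<le> lp i t \<and> lp i t + 2 \<le> i + leaves t"
proof (induction t arbitrary: i)
  case Leaf then show ?case by simp
next
  case (Node a b)
  show ?case
  proof (cases "b = Leaf")
    case True
    have "{i, i + leaves a} \<in> segs i a" by (rule seg_root)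
    then show ?thesis using True leaves_pos[of a] by auto
  next
    case False
    have IH: "{lp (i + leaves a) b, i + leaves a + leaves b} \<in> segs (i + leaves a) b \<and>
      {lp (i + leaves a) b, i + leaves a + leaves b - 1} \<in> segs (i + leaves a) b \<and>
      i + leaves a \<le> lp (i + leaves a) b \<and> lp (i + leaves a) b + 2 \<le> i + leaves a + leaves b"
      using Node.IH(2)[OF False, of "i + leaves a"] by simp
    then show ?thesis using False by (auto simp: add.assoc)
  qed
qed

lemma set_gen1: "X \<noteq> Y \<Longrightarrow> Y \<notin> A \<Longrightarrow>
  insert X (insert P (A \<union> {Q}) \<union> {Rr}) = (insert X (A \<union> {Y}) - {Y}) \<union> {P, Q, Rr}"
  by blast

lemma set_gen2: "X \<noteq> Y \<Longrightarrow> Y \<notin> A \<Longrightarrow>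
  insert X (A \<union> ((B - {Y}) \<union> {P, Q, Rr})) = (insert X (A \<union> B) - {Y}) \<union> {P, Q, Rr}"
  by blast

lemma segs_phi:
  "t \<noteq> Leaf \<Longrightarrow> segs i (phi t) = (gm (i + leaves t) ` segs i t - {{i + leaves t - 1, Suc (i + leaves t)}})
      \<union> {{lp i t, i + leaves t}, {i + leaves t - 1, i + leaves t}, {i + leaves t, Suc (i + leaves t)}}"
proof (induction t arbitrary: i)
  case Leaf then show ?case by simp
next
  case (Node a b)
  define e where "e = i + leaves (Node a b)"
  define j where "j = i + leaves a"
  have je: "j + leaves b = e" unfolding e_def j_def by simp
  have la: "leaves a \<ge> 1" "leaves b \<ge> 1" using leaves_pos by auto
  have ga: "gm e ` segs i a = segs i a"
  proof -
    have "gm e s = s" if "s \<in> segs i a" for s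
      using seg_sub[OF that] la unfolding e_def by (intro gm_notin) auto
    then show ?thesis by (simp add: image_cong[where g=id, simplified])
  qed
  have na: "{e - 1, Suc e} \<notin> segs i a"
    using seg_sub[of "{e - 1, Suc e}" i a] la unfolding e_def by auto
  have gr: "gm e {i, e} = {i, Suc e}" using la unfolding e_def by (simp add: gm_pair)
  have R: "gm e ` segs i (Node a b) = insert {i, Suc e} (segs i a \<union> gm e ` segs j b)"
    using ga gr unfolding e_def j_def by (simp add: image_Un)
  show ?case
  proof (cases "b = Leaf")
    case True
    have e1: "e - 1 = j" "e = Suc j" using True unfolding e_def j_def by simp_all
    have ne: "{i, Suc e} \<noteq> {e - 1, Suc e}" using la unfolding e_def by (auto simp: doubleton_eq_iff)
    have L: "segs i (phi (Node a b)) = insert {i, Suc e} (insert {i, e} (segs i a \<union> {{e - 1, e}}) \<union> {{e, Suc e}})"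
      using True e1 unfolding e_def j_def by simp
    have gb: "gm e ` segs j b = {{e - 1, Suc e}}" using True e1 by (simp add: gm_pair)
    have lpi: "lp i (Node a b) = i" using True by simp
    have R': "gm e ` segs i (Node a b) = insert {i, Suc e} (segs i a \<union> {{e - 1, Suc e}})"
      using R gb by simp
    show ?thesis unfolding e_def[symmetric] lpi L R'
      by (rule set_gen1[OF ne na])
  next
    case False
    have lpi: "lp i (Node a b) = lp j b" using False unfolding j_def by simp
    have lb: "leaves b \<ge> 2"
    proof (cases b)
      case (Node x y) then show ?thesis using leaves_pos[of x] leaves_pos[of y] by simp
    qed (use False in simp)
    have ne: "{i, Suc e} \<noteq> {e - 1, Suc e}" using la lb unfolding e_def by (auto simp: doubleton_eq_iff)
    have "segs i (phi (Node a b)) = insert {i, Suc e} (segs i a \<union> segs j (phi b))"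
      using False unfolding e_def j_def by (simp add: leaves_phi)
    also have "segs j (phi b) = (gm e ` segs j b - {{e - 1, Suc e}}) \<union> {{lp j b, e}, {e - 1, e}, {e, Suc e}}"
      using Node.IH(2)[OF False, of j] je by simp
    finally have L: "segs i (phi (Node a b)) = insert {i, Suc e} (segs i a \<union> ((gm e ` segs j b - {{e - 1, Suc e}}) \<union> {{lp j b, e}, {e - 1, e}, {e, Suc e}}))" .
    show ?thesis unfolding e_def[symmetric] lpi L R
      by (rule set_gen2[OF ne na])
  qed
qed



lemma Diag_sub: "D \<in> Diag n \<Longrightarrow> D \<subseteq> {..n}"
  unfolding Diag_def by auto

lemma gm_diag:
  assumes n: "n \<ge> 3" and s: "s \<in> segs 1 t" and l: "leaves t = n - 1" and g: "gm n s \<in> Diag (Suc n)"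
  shows "s \<in> Diag n \<or> s = {n - 1, n}"
proof -
  obtain u v where uv: "s = {u,v}" "1 \<le> u" "u < v" "v \<le> n"
    using seg_elems[OF s] l n by fastforce
  have n1: "Suc n \<ge> 3" using n by simp
  show ?thesis
  proof (cases "v < n")
    case True
    then have "gm n s = s" using uv by (intro gm_notin) auto
    then have "{u,v} \<in> Diag (Suc n)" using g uv by simp
    then have "u + 2 \<le> v" using diag_pair[OF n1 uv(3)] by simp
    then have "{u,v} \<in> Diag n" using diag_pair[OF n uv(3)] uv True by simp
    then show ?thesis using uv by simp
  next
    case False
    then have vn: "v = n" using uv by simp
    have "gm n s = {u, Suc n}" using uv vn by (simp add: gm_pair)
    then have "{u, Suc n} \<in> Diag (Suc n)" using g by simp
    then have h: "u + 2 \<le> Suc n \<and> u \<noteq> 1" using diag_pair[OF n1, of u "Suc n"] uv vn by simp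
    show ?thesis
    proof (cases "u = n - 1")
      case True then show ?thesis using uv vn by simp
    next
      case False
      then have "u + 2 \<le> n" using h uv vn by simp
      then have "{u,v} \<in> Diag n" using diag_pair[OF n uv(3)] uv vn h by simp
      then show ?thesis using uv by simp
    qed
  qed
qed

lemma not_diag_adj: "n \<ge> 3 \<Longrightarrow> {x, Suc x} \<notin> Diag n"
  using diag_pair[of n x "Suc x"] by simp

lemma tri_psi:
  assumes n: "n \<ge> 3" and l: "leaves t = n - 1"
  shows "tri_of (Suc n) (psi t) \<subseteq> gm n ` tri_of n t \<union> {{n - 1, Suc n}}"
    and "{n - 1, Suc n} \<in> tri_of (Suc n) (psi t)"
proof -
  have n1: "Suc n \<ge> 3" using n by simp
  have e: "1 + leaves t = n" using l n by simp
  have S: "segs 1 (psi t) = gm n ` segs 1 t \<union> {{n - 1, n}, {n, Suc n}}"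
    using segs_psi[of 1 t] unfolding e .
  have nd1: "{n - 1, n} \<notin> Diag (Suc n)" using not_diag_adj[OF n1, of "n - 1"] n by simp
  have nd2: "{n, Suc n} \<notin> Diag (Suc n)" using not_diag_adj[OF n1, of n] by simp
  have gl: "gm n {n - 1, n} = {n - 1, Suc n}" using n by (simp add: gm_pair)
  show "tri_of (Suc n) (psi t) \<subseteq> gm n ` tri_of n t \<union> {{n - 1, Suc n}}"
  proof
    fix x assume x: "x \<in> tri_of (Suc n) (psi t)"
    then have xs: "x \<in> segs 1 (psi t)" and xd: "x \<in> Diag (Suc n)" unfolding tri_of_def by auto
    then obtain s where s: "s \<in> segs 1 t" "x = gm n s" using S nd1 nd2 by auto
    from gm_diag[OF n s(1) l] xd s(2) have "s \<in> Diag n \<or> s = {n - 1, n}" by simp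
    then show "x \<in> gm n ` tri_of n t \<union> {{n - 1, Suc n}}"
      using s gl unfolding tri_of_def by auto
  qed
  have a: "{n - 1, n} \<in> segs 1 t" using seg_leaf[of 1 "n - 1" t] e n by simp
  have "{n - 1, Suc n} \<in> segs 1 (psi t)" using S a gl by (metis UnI1 image_eqI)
  moreover have "{n - 1, Suc n} \<in> Diag (Suc n)"
  proof -
    have "n - 1 < Suc n" "1 \<le> n - 1" "n - 1 \<noteq> 1" "n - 1 + 2 \<le> Suc n" using n by arith+
    then show ?thesis using diag_pair[OF n1, of "n - 1" "Suc n"] by simp
  qed
  ultimately show "{n - 1, Suc n} \<in> tri_of (Suc n) (psi t)" unfolding tri_of_def by simp
qed

lemma tri_phi:
  assumes n: "n \<ge> 3" and l: "leaves t = n - 1"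
  shows "tri_of (Suc n) (phi t) \<subseteq> gm n ` tri_of n t \<union> {{lp 1 t, n}}"
    and "{lp 1 t, n} \<in> tri_of (Suc n) (phi t)"
proof -
  have n1: "Suc n \<ge> 3" using n by simp
  have e: "1 + leaves t = n" using l n by simp
  have tl: "t \<noteq> Leaf" using l n by auto
  have S: "segs 1 (phi t) = (gm n ` segs 1 t - {{n - 1, Suc n}}) \<union> {{lp 1 t, n}, {n - 1, n}, {n, Suc n}}"
    using segs_phi[OF tl, of 1] unfolding e .
  have nd1: "{n - 1, n} \<notin> Diag (Suc n)" using not_diag_adj[OF n1, of "n - 1"] n by simp
  have nd2: "{n, Suc n} \<notin> Diag (Suc n)" using not_diag_adj[OF n1, of n] by simp
  have gl: "gm n {n - 1, n} = {n - 1, Suc n}" using n by (simp add: gm_pair)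
  show "tri_of (Suc n) (phi t) \<subseteq> gm n ` tri_of n t \<union> {{lp 1 t, n}}"
  proof
    fix x assume x: "x \<in> tri_of (Suc n) (phi t)"
    then have xs: "x \<in> segs 1 (phi t)" and xd: "x \<in> Diag (Suc n)" unfolding tri_of_def by auto
    show "x \<in> gm n ` tri_of n t \<union> {{lp 1 t, n}}"
    proof (cases "x = {lp 1 t, n}")
      case True then show ?thesis by simp
    next
      case False
      then obtain s where s: "s \<in> segs 1 t" "x = gm n s" "x \<noteq> {n - 1, Suc n}"
        using xs S nd1 nd2 xd by auto
      from gm_diag[OF n s(1) l] xd s(2) have "s \<in> Diag n \<or> s = {n - 1, n}" by simp
      then show ?thesis using s gl unfolding tri_of_def by auto
    qed
  qed
  have lpp: "1 \<le> lp 1 t" "lp 1 t + 2 \<le> n" using lp_props[OF tl, of 1] e by auto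
  have "{lp 1 t, n} \<in> segs 1 (phi t)" using S by simp
  moreover have "{lp 1 t, n} \<in> Diag (Suc n)" using diag_pair[OF n1, of "lp 1 t" n] lpp by simp
  ultimately show "{lp 1 t, n} \<in> tri_of (Suc n) (phi t)" unfolding tri_of_def by simp
qed

lemma lp_witness:
  assumes n: "n \<ge> 4" and l: "leaves t = n - 1"
  shows "(if lp 1 t = 1 then {1, n - 1} else {lp 1 t, n}) \<in> tri_of n t"
proof -
  have n3: "n \<ge> 3" using n by simp
  have e: "1 + leaves t = n" using l n by simp
  have tl: "t \<noteq> Leaf" using l n by auto
  have P: "{lp 1 t, n} \<in> segs 1 t" "{lp 1 t, n - 1} \<in> segs 1 t" "1 \<le> lp 1 t" "lp 1 t + 2 \<le> n"
    using lp_props[OF tl, of 1] e by auto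
  show ?thesis
  proof (cases "lp 1 t = 1")
    case True
    have "1 < n - 1" "1 + 2 \<le> n - 1" "n - 1 \<noteq> n" "n - 1 \<le> n" using n by arith+
    then have "{1, n - 1} \<in> Diag n" using diag_pair[OF n3, of 1 "n - 1"] by simp
    then show ?thesis using True P(2) unfolding tri_of_def by simp
  next
    case False
    have "{lp 1 t, n} \<in> Diag n" using diag_pair[OF n3, of "lp 1 t" n] P False by simp
    then show ?thesis using False P(1) unfolding tri_of_def by simp
  qed
qed

lemma tri_sub_atMost: "s \<in> tri_of n t \<Longrightarrow> s \<subseteq> {..n}"
  using tri_sub Diag_sub by blast

lemma adjacency:
  assumes n: "n \<ge> 3" and l: "leaves t = n - 1" and l': "leaves t' = n - 1"
    and dis: "tri_of n t \<inter> tri_of n t' = {}" and ne: "tri_of n t \<noteq> tri_of n t'"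
  shows "tri_of (Suc n) (phi t) \<inter> tri_of (Suc n) (phi t') = {}"
    and "tri_of (Suc n) (psi t) \<inter> tri_of (Suc n) (phi t') = {}"
proof -
  have n4: "n \<ge> 4"
  proof (rule ccontr)
    assume "\<not> n \<ge> 4"
    then have "n = 3" using n by simp
    then have "tri_of n t = {}" "tri_of n t' = {}" using tri_sub[of n t] tri_sub[of n t'] Diag3 by auto
    then show False using ne by simp
  qed
  have gmeq: False if "s \<in> tri_of n t" "s' \<in> tri_of n t'" "gm n s = gm n s'" for s s'
  proof -
    have "s = s'" using gm_inj[OF tri_sub_atMost[OF that(1)] tri_sub_atMost[OF that(2)] that(3)] .
    then show False using that dis by blast
  qed
  show "tri_of (Suc n) (phi t) \<inter> tri_of (Suc n) (phi t') = {}"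
  proof (rule ccontr)
    assume "tri_of (Suc n) (phi t) \<inter> tri_of (Suc n) (phi t') \<noteq> {}"
    then obtain x where x: "x \<in> tri_of (Suc n) (phi t)" "x \<in> tri_of (Suc n) (phi t')" by blast
    have x1: "x \<in> gm n ` tri_of n t \<union> {{lp 1 t, n}}" using tri_phi(1)[OF n l] x(1) by blast
    have x2: "x \<in> gm n ` tri_of n t' \<union> {{lp 1 t', n}}" using tri_phi(1)[OF n l'] x(2) by blast
    show False
    proof (cases "x = {lp 1 t, n}")
      case xa: True
      show False
      proof (cases "x = {lp 1 t', n}")
        case True
        have tl: "t \<noteq> Leaf" "t' \<noteq> Leaf" using l l' n by auto
        have lpp: "lp 1 t + 2 \<le> n" "lp 1 t' + 2 \<le> n"
          using lp_props[OF tl(1), of 1] lp_props[OF tl(2), of 1] l l' n by auto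
        have eq: "lp 1 t = lp 1 t'" using xa True lpp by (auto simp: doubleton_eq_iff)
        show False using lp_witness[OF n4 l, unfolded eq] lp_witness[OF n4 l'] dis by blast
      next
        case False
        then obtain s' where "s' \<in> tri_of n t'" "x = gm n s'" using x2 by auto
        moreover have "n \<in> x" using xa by simp
        ultimately show False using gm_no_e[of n s'] by simp
      qed
    next
      case xa: False
      then obtain s where s: "s \<in> tri_of n t" "x = gm n s" using x1 by auto
      show False
      proof (cases "x = {lp 1 t', n}")
        case True
        then have "n \<in> x" by simp
        then show False using s gm_no_e[of n s] by simp
      next
        case False
        then obtain s' where "s' \<in> tri_of n t'" "x = gm n s'" using x2 by auto
        then show False using s gmeq by metis
      qed
    qed
  qed
  show "tri_of (Suc n) (psi t) \<inter> tri_of (Suc n) (phi t') = {}"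
  proof (rule ccontr)
    assume "tri_of (Suc n) (psi t) \<inter> tri_of (Suc n) (phi t') \<noteq> {}"
    then obtain x where x: "x \<in> tri_of (Suc n) (psi t)" "x \<in> tri_of (Suc n) (phi t')" by blast
    have x1: "x \<in> gm n ` tri_of n t \<union> {{n - 1, Suc n}}" using tri_psi(1)[OF n l] x(1) by blast
    have x2: "x \<in> gm n ` tri_of n t' \<union> {{lp 1 t', n}}" using tri_phi(1)[OF n l'] x(2) by blast
    show False
    proof (cases "x = {lp 1 t', n}")
      case True
      then have "n \<in> x" by simp
      moreover have "n \<notin> x" using x1 gm_no_e n by auto
      ultimately show False by simp
    next
      case xb: False
      then obtain s' where s': "s' \<in> tri_of n t'" "x = gm n s'" using x2 by auto
      show False
      proof (cases "x = {n - 1, Suc n}")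
        case True
        have gl: "gm n {n - 1, n} = {n - 1, Suc n}" using n by (simp add: gm_pair)
        have "{n - 1, n} \<subseteq> {..n}" by auto
        then have "s' = {n - 1, n}" using gm_inj[OF tri_sub_atMost[OF s'(1)]] s'(2) True gl by metis
        moreover have "{n - 1, n} \<notin> Diag n" using not_diag_adj[OF n, of "n - 1"] n by simp
        ultimately show False using s'(1) tri_sub by blast
      next
        case False
        then obtain s where "s \<in> tri_of n t" "x = gm n s" using x1 by auto
        then show False using s' gmeq by metis
      qed
    qed
  qed
qed



definition wt :: "nat \<Rightarrow> ptree" where
  "wt n = Node (Node Leaf (rcomb (n - 3))) Leaf"

lemma rcomb_segs: "s \<in> segs i (rcomb m) \<Longrightarrow> (\<exists>x. s = {x, Suc x}) \<or> i + Suc m \<in> s"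
proof (induction m arbitrary: i)
  case 0 then show ?case by auto
next
  case (Suc m)
  from Suc.prems have "s = {i, i + Suc (Suc m)} \<or> s = {i, Suc i} \<or> s \<in> segs (Suc i) (rcomb m)"
    by (simp add: leaves_rcomb)
  then show ?case
  proof (elim disjE)
    assume "s \<in> segs (Suc i) (rcomb m)"
    from Suc.IH[OF this] show ?thesis by simp
  qed auto
qed

lemma wt_leaves: "n \<ge> 3 \<Longrightarrow> leaves (wt n) = n"
  unfolding wt_def by (simp add: leaves_rcomb)

lemma wt_kpar: "kpar 3 (wt n)"
  unfolding wt_def using kpar1_rcomb[of "n - 3"] by (simp add: kpar3_Node kpar2_Node kpar2_Leaf kpar3_Leaf)

lemma wt_tri:
  assumes n: "n \<ge> 3" and s: "s \<in> tri_of (Suc n) (wt n)"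
  shows "n \<in> s"
proof -
  have n1: "Suc n \<ge> 3" using n by simp
  have sd: "s \<in> Diag (Suc n)" and ss: "s \<in> segs 1 (wt n)" using s unfolding tri_of_def by auto
  have l: "leaves (Node Leaf (rcomb (n - 3))) = n - 1" using n by (simp add: leaves_rcomb)
  have "segs 1 (wt n) = insert {1, Suc n} (segs 1 (Node Leaf (rcomb (n - 3))) \<union> segs n Leaf)"
    unfolding wt_def using l n by (simp add: leaves_rcomb)
  also have "segs 1 (Node Leaf (rcomb (n - 3))) = insert {1, n} ({{1, 2}} \<union> segs 2 (rcomb (n - 3)))"
    using l n by (simp add: leaves_rcomb numeral_2_eq_2)
  finally have S: "s = {1, Suc n} \<or> s = {1, n} \<or> s = {1, 2} \<or> s \<in> segs 2 (rcomb (n - 3)) \<or> s = {n, Suc n}"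
    using ss by auto
  have nd1: "{1, Suc n} \<notin> Diag (Suc n)" using diag_pair[OF n1, of 1 "Suc n"] n by simp
  have nd2: "{x, Suc x} \<notin> Diag (Suc n)" for x using not_diag_adj[OF n1] by simp
  have e: "2 + Suc (n - 3) = n" using n by simp
  show ?thesis
  proof -
    consider "s = {1, Suc n}" | "s = {1, n}" | "s = {1, 2}" | "s \<in> segs 2 (rcomb (n - 3))" | "s = {n, Suc n}"
      using S by blast
    then show ?thesis
    proof cases
      case 1 then show ?thesis using sd nd1 by simp
    next
      case 2 then show ?thesis by simp
    next
      case 3 then show ?thesis using sd nd2[of 1] by (simp add: numeral_2_eq_2)
    next
      case 4
      from rcomb_segs[OF this] show ?thesis
      proof
        assume "\<exists>x. s = {x, Suc x}" then show ?thesis using sd nd2 by blast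
      next
        assume "2 + Suc (n - 3) \<in> s" then show ?thesis using e by simp
      qed
    next
      case 5 then show ?thesis by simp
    qed
  qed
qed

lemma rcomb_in: "n \<ge> 3 \<Longrightarrow> tri_of n (rcomb (n - 2)) \<in> Tri_k 3 n"
proof -
  assume n: "n \<ge> 3"
  have "leaves (rcomb (n - 2)) = n - 1" using n by (simp add: leaves_rcomb)
  then show ?thesis unfolding Tri3_mem using kpar3_rcomb by blast
qed

lemma myc_step:
  assumes n: "n \<ge> 3" and pc: "prop_col k c (Tri_k 3 (Suc n))"
  shows "k \<ge> 1 \<and> (\<exists>c'. prop_col (k - 1) c' (Tri_k 3 n))"
proof -
  define W where "W = tri_of (Suc n) (wt n)"
  have WF: "W \<in> Tri_k 3 (Suc n)"
  proof -
    have "leaves (wt n) = Suc n - 1" using wt_leaves[OF n] by simp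
    then show ?thesis unfolding W_def Tri3_mem using wt_kpar by blast
  qed
  have cb: "\<And>A. A \<in> Tri_k 3 (Suc n) \<Longrightarrow> c A < k" using pc unfolding prop_col_def by blast
  have cp: "\<And>A B. A \<in> Tri_k 3 (Suc n) \<Longrightarrow> B \<in> Tri_k 3 (Suc n) \<Longrightarrow> A \<noteq> B \<Longrightarrow> A \<inter> B = {} \<Longrightarrow> c A \<noteq> c B"
    using pc unfolding prop_col_def by blast
  have k1: "k \<ge> 1" using cb[OF WF] by simp
  define rep where "rep T = (SOME t. leaves t = n - 1 \<and> kpar 3 t \<and> T = tri_of n t)" for T
  have rep: "leaves (rep T) = n - 1 \<and> kpar 3 (rep T) \<and> T = tri_of n (rep T)" if "T \<in> Tri_k 3 n" for T
  proof -
    have "\<exists>t. leaves t = n - 1 \<and> kpar 3 t \<and> T = tri_of n t" using that Tri3_mem by simp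
    then show ?thesis unfolding rep_def by (rule someI_ex)
  qed
  define Phi where "Phi T = tri_of (Suc n) (phi (rep T))" for T
  define Psi where "Psi T = tri_of (Suc n) (psi (rep T))" for T
  have PhiF: "Phi T \<in> Tri_k 3 (Suc n)" if "T \<in> Tri_k 3 n" for T
  proof -
    have "leaves (phi (rep T)) = Suc n - 1" using rep[OF that] leaves_phi n by simp
    moreover have "kpar 3 (phi (rep T))" using rep[OF that] kpar3_phi by blast
    ultimately show ?thesis unfolding Phi_def Tri3_mem by blast
  qed
  have PsiF: "Psi T \<in> Tri_k 3 (Suc n)" if "T \<in> Tri_k 3 n" for T
  proof -
    have "leaves (psi (rep T)) = Suc n - 1" using rep[OF that] leaves_psi n by simp
    moreover have "kpar 3 (psi (rep T))" using rep[OF that] kpar3_psi by blast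
    ultimately show ?thesis unfolding Psi_def Tri3_mem by blast
  qed
  have PhiNE: "Phi T \<noteq> {}" if "T \<in> Tri_k 3 n" for T
    using tri_phi(2)[OF n, of "rep T"] rep[OF that] unfolding Phi_def by auto
  have PsiNE: "Psi T \<noteq> {}" if "T \<in> Tri_k 3 n" for T
    using tri_psi(2)[OF n, of "rep T"] rep[OF that] unfolding Psi_def by auto
  have PsiW: "Psi T \<inter> W = {}" if "T \<in> Tri_k 3 n" for T
  proof -
    have "n \<notin> x" if "x \<in> Psi T" for x
    proof -
      have "x \<in> gm n ` tri_of n (rep T) \<union> {{n - 1, Suc n}}"
        using tri_psi(1)[OF n, of "rep T"] rep[OF \<open>T \<in> Tri_k 3 n\<close>] that unfolding Psi_def by auto
      then show ?thesis using gm_no_e n by auto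
    qed
    moreover have "n \<in> x" if "x \<in> W" for x using wt_tri[OF n] that unfolding W_def by blast
    ultimately show ?thesis by blast
  qed
  have adj: "Phi T \<inter> Phi T' = {} \<and> Psi T \<inter> Phi T' = {}"
    if "T \<in> Tri_k 3 n" "T' \<in> Tri_k 3 n" "T \<noteq> T'" "T \<inter> T' = {}" for T T'
  proof -
    have r: "leaves (rep T) = n - 1" "T = tri_of n (rep T)" using rep[OF that(1)] by auto
    have r': "leaves (rep T') = n - 1" "T' = tri_of n (rep T')" using rep[OF that(2)] by auto
    have d: "tri_of n (rep T) \<inter> tri_of n (rep T') = {}" using that(4) r r' by simp
    have ne: "tri_of n (rep T) \<noteq> tri_of n (rep T')" using that(3) r r' by simp
    show ?thesis using adjacency[OF n r(1) r'(1) d ne] unfolding Phi_def Psi_def by simp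
  qed
  define c1 where "c1 T = (if c (Phi T) = c W then c (Psi T) else c (Phi T))" for T
  define c2 where "c2 T = (if c1 T < c W then c1 T else c1 T - 1)" for T
  have c1b: "c1 T < k \<and> c1 T \<noteq> c W" if "T \<in> Tri_k 3 n" for T
  proof (cases "c (Phi T) = c W")
    case True
    have "Psi T \<noteq> W" using PsiW[OF that] PsiNE[OF that] by auto
    then have "c (Psi T) \<noteq> c W" using cp[OF PsiF[OF that] WF] PsiW[OF that] by blast
    then show ?thesis using True cb[OF PsiF[OF that]] unfolding c1_def by simp
  next
    case False
    then show ?thesis using cb[OF PhiF[OF that]] unfolding c1_def by simp
  qed
  have c1p: "c1 T \<noteq> c1 T'" if T: "T \<in> Tri_k 3 n" "T' \<in> Tri_k 3 n" "T \<noteq> T'" "T \<inter> T' = {}" for T T'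
  proof -
    have a1: "Phi T \<inter> Phi T' = {}" "Psi T \<inter> Phi T' = {}" using adj[OF T] by auto
    have a2: "Psi T' \<inter> Phi T = {}" using adj[OF T(2) T(1)] T(3,4) by auto
    have pp: "c (Phi T) \<noteq> c (Phi T')"
      using cp[OF PhiF[OF T(1)] PhiF[OF T(2)]] a1(1) PhiNE[OF T(1)] by auto
    have sp: "c (Psi T) \<noteq> c (Phi T')"
      using cp[OF PsiF[OF T(1)] PhiF[OF T(2)]] a1(2) PsiNE[OF T(1)] by auto
    have ps: "c (Phi T) \<noteq> c (Psi T')"
      using cp[OF PhiF[OF T(1)] PsiF[OF T(2)]] a2 PsiNE[OF T(2)] by (auto simp: Int_commute)
    show ?thesis unfolding c1_def using pp sp ps by auto
  qed
  have "prop_col (k - 1) c2 (Tri_k 3 n)"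
    unfolding prop_col_def
  proof (intro conjI ballI impI)
    fix A assume A: "A \<in> Tri_k 3 n"
    show "c2 A < k - 1" using c1b[OF A] cb[OF WF] unfolding c2_def by auto
  next
    fix A B assume A: "A \<in> Tri_k 3 n" and B: "B \<in> Tri_k 3 n" and AB: "A \<noteq> B \<and> A \<inter> B = {}"
    have "c1 A \<noteq> c1 B" using c1p[OF A B] AB by blast
    then show "c2 A \<noteq> c2 B" using c1b[OF A] c1b[OF B] unfolding c2_def by auto
  qed
  then show ?thesis using k1 by blast
qed

lemma lower: "n \<ge> 3 \<Longrightarrow> prop_col k c (Tri_k 3 n) \<Longrightarrow> n - 2 \<le> k"
proof (induction n arbitrary: k c rule: nat_induct_at_least)
  case base
  have "tri_of 3 (rcomb 1) \<in> Tri_k 3 3" using rcomb_in[of 3] by simp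
  then have "c (tri_of 3 (rcomb 1)) < k" using base unfolding prop_col_def by blast
  then show ?case by simp
next
  case (Suc n)
  from myc_step[OF Suc.hyps Suc.prems] obtain c' where "k \<ge> 1" "prop_col (k - 1) c' (Tri_k 3 n)" by blast
  then show ?case using Suc.IH by fastforce
qed

lemma chrom_part:
  assumes n: "n \<ge> 3"
  shows "kneser_chromatic (Tri_k 3 n) = n - 2"
  unfolding kneser_prop
proof (rule Least_equality)
  show "\<exists>c. prop_col (n - 2) c (Tri_k 3 n)" using upper[OF n] by blast
next
  fix y assume "\<exists>c. prop_col y c (Tri_k 3 n)"
  then show "n - 2 \<le> y" using lower[OF n] by blast
qed

theorem theorem1p2:
  fixes n :: nat
  assumes "n \<ge> 3"
  shows "card (Tri_k 3 n) = fib (2 * n - 5) \<and> kneser_chromatic (Tri_k 3 n) = n - 2"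
  using card_part[OF assms] chrom_part[OF assms] by simp


end
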